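(* Let $\psi:\mathbb R\to\mathbb R$ satisfy $-\log(1-x+x^2/2)\leq \psi(x)\leq \log(1+x+x^2/2)$ for all $x\in\mathbb R$. Let $Y\in\mathbb C^{d\times d}$ be a self-adjoint random matrix with finite second moments of entries, let $\theta>0$, and for a (deterministic) self-adjoint $S\in\mathbb C^{d\times d}$ let $X(S):=\psi(\theta(Y-S))$. Then for every self-adjoint $S$, \[ \Big\| S- \mathbb EY + \frac{1}{\theta}\mathbb E X(S) \Big\|\leq \frac{\theta}{2}\left\| \mathbb E(Y - S)^2 \right\|. \]
   Context: $\|\cdot\|$ is the operator norm. For a real function $f$ and a self-adjoint matrix $A=U\,\mathrm{diag}(\lambda_i)\,U^\ast$, $f(A):=U\,\mathrm{diag}(f(\lambda_i))\,U^\ast$. Expectations are entrywise. *)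

theory Defs
  imports "HOL-Probability.Probability"
begin

text \<open>Complex d x d matrices are rendered as complex ^'n ^'n with 'n a finite type (d = CARD('n)).\<close>

definition adjoint_mat :: "complex ^'n ^'n \<Rightarrow> complex ^'n ^'n" where
  "adjoint_mat A = (\<chi> i j. cnj (A $ j $ i))"

definition self_adjoint :: "complex ^'n ^'n \<Rightarrow> bool" where
  "self_adjoint A \<longleftrightarrow> adjoint_mat A = A"

definition unitary_mat :: "complex ^'n ^'n \<Rightarrow> bool" where
  "unitary_mat U \<longleftrightarrow> adjoint_mat U ** U = mat 1 \<and> U ** adjoint_mat U = mat 1"

definition diag_mat :: "('n \<Rightarrow> real) \<Rightarrow> complex ^'n ^'n" where
  "diag_mat l = (\<chi> i j. if i = j then complex_of_real (l i) else 0)"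

text \<open>Functional calculus: f(A) = U diag(f(lambda_i)) U^* for a spectral decomposition
  A = U diag(lambda_i) U^* (well defined for self-adjoint A).\<close>
definition matfun :: "(real \<Rightarrow> real) \<Rightarrow> complex ^'n ^'n \<Rightarrow> complex ^'n ^'n" where
  "matfun f A = (SOME B. \<exists>U l. unitary_mat U \<and> A = U ** diag_mat l ** adjoint_mat U
                        \<and> B = U ** diag_mat (f \<circ> l) ** adjoint_mat U)"

definition opnorm :: "complex ^'n ^'n \<Rightarrow> real" where
  "opnorm A = onorm (\<lambda>v::complex^'n. A *v v)"

definition mat_expect :: "'a measure \<Rightarrow> ('a \<Rightarrow> complex ^'n ^'n) \<Rightarrow> complex ^'n ^'n" where
  "mat_expect M Z = (\<chi> i j. LINT w|M. Z w $ i $ j)"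

end

theory Submission
  imports Defs
begin

definition cinner :: "complex^'n \<Rightarrow> complex^'n \<Rightarrow> complex" where
  "cinner x y = (\<Sum>i\<in>UNIV. x$i * cnj (y$i))"

lemma adjoint_nth[simp]: "adjoint_mat A $ i $ j = cnj (A $ j $ i)"
  by (simp add: adjoint_mat_def)

lemma cinner_adj: "cinner (M *v x) y = cinner x (adjoint_mat M *v y)"
proof -
  have "cinner (M *v x) y = (\<Sum>i\<in>UNIV. \<Sum>j\<in>UNIV. M$i$j * x$j * cnj (y$i))"
    unfolding cinner_def matrix_vector_mult_def by (simp add: sum_distrib_right)
  also have "... = (\<Sum>j\<in>UNIV. \<Sum>i\<in>UNIV. M$i$j * x$j * cnj (y$i))" by (rule sum.swap)
  also have "... = cinner x (adjoint_mat M *v y)"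
    unfolding cinner_def matrix_vector_mult_def by (simp add: sum_distrib_left mult_ac)
  finally show ?thesis .
qed

lemma adjoint_adjoint[simp]: "adjoint_mat (adjoint_mat A) = A"
  by (simp add: vec_eq_iff)

lemma adjoint_mult: "adjoint_mat (A ** B) = adjoint_mat B ** adjoint_mat A"
  by (simp add: vec_eq_iff matrix_matrix_mult_def mult.commute)

lemma cinner_cnj: "cnj (cinner x y) = cinner y x"
  by (simp add: cinner_def mult.commute)

lemma cinner_self: "cinner x x = of_real (norm x ^ 2)"
proof -
  have "norm x ^ 2 = (\<Sum>i\<in>UNIV. (cmod (x$i))^2)"
    by (simp add: norm_vec_def L2_set_def sum_nonneg)
  moreover have "\<And>i. x$i * cnj(x$i) = of_real ((cmod (x$i))^2)" by (rule complex_norm_square[symmetric])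
  ultimately show ?thesis unfolding cinner_def by (simp only: of_real_sum)
qed

lemma cinner_add_left: "cinner (x + y) z = cinner x z + cinner y z"
  by (simp add: cinner_def distrib_right sum.distrib)
lemma cinner_add_right: "cinner z (x + y) = cinner z x + cinner z y"
  by (simp add: cinner_def distrib_left sum.distrib)
lemma cinner_diff_left: "cinner (x - y) z = cinner x z - cinner y z"
  by (simp add: cinner_def left_diff_distrib sum_subtractf)
lemma cinner_diff_right: "cinner z (x - y) = cinner z x - cinner z y"
  by (simp add: cinner_def right_diff_distrib sum_subtractf)
lemma cinner_smult_left: "cinner (c *s x) y = c * cinner x y"
  by (simp add: cinner_def sum_distrib_left mult_ac)
lemma cinner_smult_right: "cinner x (c *s y) = cnj c * cinner x y"
  by (simp add: cinner_def sum_distrib_left mult_ac)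
lemma cinner_zero_left[simp]: "cinner 0 y = 0" by (simp add: cinner_def)
lemma cinner_zero_right[simp]: "cinner y 0 = 0" by (simp add: cinner_def)
lemma cinner_sum_left: "cinner (sum f A) y = (\<Sum>a\<in>A. cinner (f a) y)"
  by (induct A rule: infinite_finite_induct) (auto simp: cinner_add_left)

lemma mv_add: "(M::complex^'n^'m) *v (x + y) = M *v x + M *v y"
  by (simp add: matrix_vector_mult_def vec_eq_iff distrib_left sum.distrib)
lemma mv_smult: "(M::complex^'n^'m) *v (c *s x) = c *s (M *v x)"
  by (simp add: matrix_vector_mult_def vec_eq_iff sum_distrib_left mult.left_commute)
lemma mv_diff: "(M::complex^'n^'m) *v (x - y) = M *v x - M *v y"
  by (simp add: matrix_vector_mult_def vec_eq_iff algebra_simps sum_subtractf)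

lemma sa_cinner: "self_adjoint A \<Longrightarrow> cinner (A *v x) y = cinner x (A *v y)"
  by (simp add: cinner_adj self_adjoint_def)

lemma sa_real: "self_adjoint A \<Longrightarrow> cinner (A *v x) x = of_real (Re (cinner (A *v x) x))"
proof -
  assume sa: "self_adjoint A"
  have "cnj (cinner (A *v x) x) = cinner (A *v x) x"
    using sa_cinner[OF sa, of x x] cinner_cnj[of "A *v x" x] by simp
  hence "Im (cinner (A *v x) x) = 0" by (simp add: complex_eq_iff)
  thus ?thesis by (simp add: complex_eq_iff)
qed



lemma scaleR_smult: "r *\<^sub>R (x::complex^'n) = complex_of_real r *s x"
  unfolding vec_eq_iff by (auto simp: scaleR_conv_of_real[where 'a=complex])

lemma smult_decomp: "(c::complex) *s (v::complex^'n) = Re c *\<^sub>R v + Im c *\<^sub>R (\<i> *s v)"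
  by (simp add: vec_eq_iff complex_eq_iff)

lemma exists_orth:
  fixes f :: "nat \<Rightarrow> complex^'n"
  assumes on: "\<And>i j. i<k \<Longrightarrow> j<k \<Longrightarrow> cinner (f i) (f j) = (if i = j then 1 else 0)"
   and k: "k < CARD('n)"
  shows "\<exists>x. x \<noteq> 0 \<and> (\<forall>i<k. cinner x (f i) = 0)"
proof (rule ccontr)
  assume H: "\<not> ?thesis"
  let ?B = "f ` {..<k} \<union> (\<lambda>i. \<i> *s f i) ` {..<k}"
  have "UNIV \<subseteq> span ?B"
  proof
    fix x :: "complex^'n"
    let ?p = "\<Sum>i<k. cinner x (f i) *s f i"
    have "cinner (x - ?p) (f j) = 0" if j: "j<k" for j
    proof -
      have "cinner ?p (f j) = (\<Sum>i<k. cinner x (f i) * (if i = j then 1 else 0))"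
        using on j by (simp add: cinner_sum_left cinner_smult_left)
      also have "... = cinner x (f j)" using j by (simp add: if_distrib cong: if_cong)
      finally show ?thesis by (simp add: cinner_diff_left)
    qed
    hence "x - ?p = 0" using H by blast
    hence "x = ?p" by simp
    also have "... \<in> span ?B"
      by (intro span_sum, subst smult_decomp, intro span_add span_scale span_base) auto
    finally show "x \<in> span ?B" .
  qed
  hence "dim (UNIV::(complex^'n) set) \<le> card ?B" by (intro span_card_ge_dim) auto
  moreover have "card ?B \<le> 2*k"
  proof -
    have "card ?B \<le> card (f ` {..<k}) + card ((\<lambda>i. \<i> *s f i) ` {..<k})" by (rule card_Un_le)
    also have "... \<le> k + k" by (intro add_mono, (rule order_trans[OF card_image_le], auto)+)
    finally show ?thesis by simp
  qed
  moreover have "dim (UNIV::(complex^'n) set) = 2 * CARD('n)" by simp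
  ultimately show False using k by linarith
qed

lemma quad_zero:
  fixes a b :: real
  assumes H: "\<And>t. 2*t*a + t^2*b \<le> 0"
  shows "a = 0"
proof (rule ccontr)
  assume a0: "a \<noteq> 0"
  define t where "t = a / (\<bar>b\<bar> + 1)"
  have pos: "\<bar>b\<bar> + 1 > 0" by simp
  have e: "2*t*a + t^2*b = t * (2*a + t*b)" by (simp add: power2_eq_square algebra_simps)
  have "\<bar>t*b\<bar> = \<bar>a\<bar> * (\<bar>b\<bar> / (\<bar>b\<bar>+1))" unfolding t_def using pos by (simp add: abs_mult)
  also have "... < \<bar>a\<bar> * 1" using a0 pos by (intro mult_strict_left_mono) auto
  finally have tb: "\<bar>t*b\<bar> < \<bar>a\<bar>" by simp
  have "t * (2*a + t*b) > 0"
  proof (cases "a > 0")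
    case True
    hence "t > 0" unfolding t_def using pos by simp
    moreover have "2*a + t*b > 0" using tb True by linarith
    ultimately show ?thesis by simp
  next
    case False
    hence "a < 0" using a0 by simp
    hence "t < 0" unfolding t_def using pos by (simp add: divide_neg_pos)
    moreover have "2*a + t*b < 0" using tb \<open>a<0\<close> by linarith
    ultimately show ?thesis by (simp add: mult_neg_neg)
  qed
  with H[of t] e show False by simp
qed

lemma cinner_norm1: "norm v = 1 \<Longrightarrow> cinner v v = 1"
  by (simp add: cinner_self)

lemma cinner_eq0: "cinner u u = 0 \<Longrightarrow> u = 0"
  by (simp add: cinner_self)

lemma rayleigh:
  fixes A :: "complex^'n^'n" and f :: "nat \<Rightarrow> complex^'n"
  assumes sa: "self_adjoint A"
   and inv: "\<And>x. (\<forall>i<k. cinner x (f i) = 0) \<Longrightarrow> (\<forall>i<k. cinner (A *v x) (f i) = 0)"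
   and ex: "x0 \<noteq> 0" "\<forall>i<k. cinner x0 (f i) = 0"
  shows "\<exists>v. norm v = 1 \<and> (\<forall>i<k. cinner v (f i) = 0) \<and> A *v v = cinner (A *v v) v *s v"
proof -
  define W where "W = {x. \<forall>i<k. cinner x (f i) = 0}"
  define K where "K = {x\<in>W. norm x = 1}"
  define Q where "Q x = Re (cinner (A *v x) x)" for x
  have Wlin: "x + c *s y \<in> W" if "x \<in> W" "y \<in> W" for x y c
    using that by (simp add: W_def cinner_add_left cinner_smult_left)
  have cont_ci: "continuous_on UNIV (\<lambda>x. cinner x c)" for c :: "complex^'n"
    unfolding cinner_def by (intro continuous_intros)
  have Keq: "K = (\<Inter>i\<in>{..<k}. {x. cinner x (f i) = 0}) \<inter> sphere 0 1"
    unfolding K_def W_def by auto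
  have "closed K" unfolding Keq
    by (intro closed_Int closed_INT ballI closed_Collect_eq[OF cont_ci continuous_on_const] closed_sphere)
  moreover have "bounded K" unfolding Keq by (rule bounded_subset[OF bounded_sphere]) auto
  ultimately have "compact K" by (simp add: compact_eq_bounded_closed)
  have n1: "norm (x0 /\<^sub>R norm x0) = 1" using ex by simp
  have cs: "cinner (x0 /\<^sub>R norm x0) y = of_real (inverse (norm x0)) * cinner x0 y" for y
    by (subst scaleR_smult) (rule cinner_smult_left)
  have "x0 /\<^sub>R norm x0 \<in> W" using ex unfolding W_def by (simp add: cs)
  hence "x0 /\<^sub>R norm x0 \<in> K" using n1 unfolding K_def by simp
  hence "K \<noteq> {}" by auto
  have "continuous_on K Q" unfolding Q_def cinner_def by (intro continuous_intros)
  from continuous_attains_sup[OF \<open>compact K\<close> \<open>K \<noteq> {}\<close> this]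
  obtain v where vK: "v \<in> K" and vmax: "\<And>y. y \<in> K \<Longrightarrow> Q y \<le> Q v" by blast
  have vW: "v \<in> W" and nv: "norm v = 1" using vK by (auto simp: K_def)
  have vv: "cinner v v = 1" using nv by (rule cinner_norm1)
  have Qscale: "Q (complex_of_real c *s x) = c^2 * Q x" for c x
    by (simp add: Q_def mv_smult cinner_smult_left cinner_smult_right power2_eq_square)
  have Qbound: "Q x \<le> Q v * (norm x)^2" if "x \<in> W" for x
  proof (cases "x = 0")
    case True thus ?thesis by (simp add: Q_def matrix_vector_mult_def cinner_def)
  next
    case False
    define y where "y = complex_of_real (inverse (norm x)) *s x"
    have ys: "y = x /\<^sub>R norm x" unfolding y_def by (simp add: scaleR_smult)
    have "norm y = 1" using False unfolding ys by simp
    moreover have "y \<in> W" using that unfolding y_def W_def by (simp add: cinner_smult_left)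
    ultimately have "y \<in> K" unfolding K_def by simp
    hence "Q y \<le> Q v" by (rule vmax)
    moreover have "Q y = Q x / (norm x)^2" unfolding y_def Qscale by (simp add: field_simps power2_eq_square)
    ultimately show ?thesis using False by (simp add: field_simps)
  qed
  have key: "Re (cinner (A *v v) w) = 0" if wW: "w \<in> W" and wv: "cinner w v = 0" for w
  proof -
    define a where "a = Re (cinner (A *v v) w)"
    define b where "b = Q w - Q v * (norm w)^2"
    have "2*t*a + t^2*b \<le> 0" for t :: real
    proof -
      define x where "x = v + complex_of_real t *s w"
      have "x \<in> W" unfolding x_def by (rule Wlin[OF vW wW])
      hence "Q x \<le> Q v * (norm x)^2" by (rule Qbound)
      moreover have "Q x = Q v + 2*t*a + t^2 * Q w"
      proof -
        have c1: "cinner (A *v w) v = cnj (cinner (A *v v) w)"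
          by (simp add: sa_cinner[OF sa] cinner_cnj)
        have "cinner (A *v x) x = cinner (A *v v) v + complex_of_real t * cinner (A *v v) w
              + complex_of_real t * cinner (A *v w) v + complex_of_real t * complex_of_real t * cinner (A *v w) w"
          unfolding x_def by (simp add: mv_add mv_smult cinner_add_left cinner_add_right
              cinner_smult_left cinner_smult_right algebra_simps)
        thus ?thesis unfolding Q_def a_def c1 by (simp add: power2_eq_square)
      qed
      moreover have "(norm x)^2 = 1 + t^2 * (norm w)^2"
      proof -
        have c2: "cinner v w = 0" using wv cinner_cnj[of w v] by simp
        have "cinner x x = cinner v v + complex_of_real t * cinner v w
              + complex_of_real t * cinner w v + complex_of_real t * complex_of_real t * cinner w w"
          unfolding x_def by (simp add: cinner_add_left cinner_add_right
              cinner_smult_left cinner_smult_right algebra_simps)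
        hence "complex_of_real ((norm x)^2) = 1 + complex_of_real (t^2 * (norm w)^2)"
          unfolding cinner_self vv[unfolded cinner_self] c2 wv by (simp add: power2_eq_square)
        thus ?thesis by (metis of_real_1 of_real_add of_real_eq_iff)
      qed
      ultimately show ?thesis unfolding b_def by (simp add: algebra_simps)
    qed
    thus ?thesis using quad_zero unfolding a_def by blast
  qed
  have key2: "cinner (A *v v) w = 0" if wW: "w \<in> W" and wv: "cinner w v = 0" for w
  proof -
    have r: "Re (cinner (A *v v) w) = 0" by (rule key[OF wW wv])
    have "\<i> *s w \<in> W" using Wlin[OF _ wW, of 0 \<i>] by (simp add: W_def)
    moreover have "cinner (\<i> *s w) v = 0" using wv by (simp add: cinner_smult_left)
    ultimately have "Re (cinner (A *v v) (\<i> *s w)) = 0" by (rule key)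
    hence "Im (cinner (A *v v) w) = 0" by (simp add: cinner_smult_right)
    with r show ?thesis by (simp add: complex_eq_iff)
  qed
  define lam where "lam = cinner (A *v v) v"
  define u where "u = A *v v - lam *s v"
  have AvW: "A *v v \<in> W" using inv vW by (simp add: W_def)
  have uW: "u \<in> W" unfolding u_def using Wlin[OF AvW vW, of "- lam"]
    by (simp add: W_def cinner_diff_left cinner_smult_left)
  have uv: "cinner u v = 0" unfolding u_def lam_def by (simp add: cinner_diff_left cinner_smult_left vv)
  have Au: "cinner (A *v v) u = 0" by (rule key2[OF uW uv])
  have vu: "cinner v u = 0" using uv cinner_cnj[of u v] by simp
  have "cinner u u = cinner (A *v v - lam *s v) u" by (subst (1) u_def) (rule refl)
  also have "... = 0" using Au vu by (simp only: cinner_diff_left cinner_smult_left) simp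
  finally have "cinner u u = 0" .
  hence "u = 0" by (rule cinner_eq0)
  hence "A *v v = lam *s v" unfolding u_def by simp
  thus ?thesis using nv vW unfolding lam_def W_def by blast
qed



definition OE :: "complex^'n^'n \<Rightarrow> (nat \<Rightarrow> complex^'n) \<Rightarrow> (nat \<Rightarrow> real) \<Rightarrow> nat \<Rightarrow> bool" where
 "OE A f l k \<longleftrightarrow> (\<forall>i<k. \<forall>j<k. cinner (f i) (f j) = (if i = j then 1 else 0))
     \<and> (\<forall>i<k. A *v f i = complex_of_real (l i) *s f i)"

lemma OE_ext:
  fixes A :: "complex^'n^'n"
  assumes sa: "self_adjoint A" and oe: "OE A f l k" and k: "k < CARD('n)"
  shows "\<exists>f' l'. OE A f' l' (Suc k)"
proof -
  have on: "\<And>i j. i<k \<Longrightarrow> j<k \<Longrightarrow> cinner (f i) (f j) = (if i = j then 1 else 0)"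
   and ev: "\<And>i. i<k \<Longrightarrow> A *v f i = complex_of_real (l i) *s f i" using oe unfolding OE_def by auto
  obtain x0 where x0: "x0 \<noteq> 0" "\<forall>i<k. cinner x0 (f i) = 0" using exists_orth[OF on k] by blast
  have inv: "\<forall>i<k. cinner (A *v x) (f i) = 0" if "\<forall>i<k. cinner x (f i) = 0" for x
    using that by (simp add: sa_cinner[OF sa] ev cinner_smult_right)
  obtain v where nv: "norm v = 1" and vo: "\<forall>i<k. cinner v (f i) = 0"
    and eig: "A *v v = cinner (A *v v) v *s v"
    using rayleigh[OF sa inv x0] by blast
  define mu where "mu = Re (cinner (A *v v) v)"
  have eig2: "A *v v = complex_of_real mu *s v" unfolding mu_def using eig sa_real[OF sa] by metis
  have vv: "cinner v v = 1" using nv by (rule cinner_norm1)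
  have ov: "cinner (f i) v = 0" if "i<k" for i using vo that cinner_cnj[of v "f i"] by simp
  have "OE A (f(k:=v)) (l(k:=mu)) (Suc k)"
    unfolding OE_def
  proof (intro conjI allI impI)
    fix i j assume "i < Suc k" "j < Suc k"
    thus "cinner ((f(k := v)) i) ((f(k := v)) j) = (if i = j then 1 else 0)"
      using on vo ov vv by (cases "i = k"; cases "j = k") auto
  next
    fix i assume "i < Suc k"
    thus "A *v (f(k := v)) i = complex_of_real ((l(k := mu)) i) *s (f(k := v)) i"
      using ev eig2 by (cases "i = k") auto
  qed
  thus ?thesis by blast
qed

lemma OE_all:
  fixes A :: "complex^'n^'n"
  assumes sa: "self_adjoint A"
  shows "k \<le> CARD('n) \<Longrightarrow> \<exists>f l. OE A f l k"
proof (induction k)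
  case 0 show ?case by (simp add: OE_def)
next
  case (Suc k)
  then obtain f l where "OE A f l k" by auto
  thus ?case using OE_ext[OF sa] Suc.prems by auto
qed

lemma spectral:
  fixes A :: "complex^'n^'n"
  assumes sa: "self_adjoint A"
  shows "\<exists>U l. unitary_mat U \<and> A = U ** diag_mat l ** adjoint_mat U"
proof -
  obtain f l where oe: "OE A f l CARD('n)" using OE_all[OF sa order_refl] by blast
  have on: "\<And>i j. i<CARD('n) \<Longrightarrow> j<CARD('n) \<Longrightarrow> cinner (f i) (f j) = (if i = j then 1 else 0)"
   and ev: "\<And>i. i<CARD('n) \<Longrightarrow> A *v f i = complex_of_real (l i) *s f i" using oe unfolding OE_def by auto
  obtain h :: "nat \<Rightarrow> 'n" where h: "bij_betw h {0..<CARD('n)} (UNIV::'n set)"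
    using ex_bij_betw_nat_finite[of "UNIV::'n set"] by auto
  define g where "g = inv_into {0..<CARD('n)} h"
  have g: "bij_betw g UNIV {0..<CARD('n)}" unfolding g_def by (rule bij_betw_inv_into[OF h])
  have gl: "g c < CARD('n)" for c using g by (auto simp: bij_betw_def)
  have ginj: "g a = g b \<longleftrightarrow> a = b" for a b using g by (auto simp: bij_betw_def inj_on_def)
  define U where "U = (\<chi> i c. f (g c) $ i)"
  define lam where "lam c = l (g c)" for c
  have UU: "adjoint_mat U ** U = mat 1"
  proof -
    have "(adjoint_mat U ** U) $ a $ b = cinner (f (g b)) (f (g a))" for a b
      unfolding U_def cinner_def matrix_matrix_mult_def by (simp add: mult.commute)
    also have "cinner (f (g b)) (f (g a)) = (if a = b then 1 else 0)" for a b
      using on[OF gl gl] ginj by auto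
    finally show ?thesis by (simp add: vec_eq_iff mat_def)
  qed
  hence UU2: "U ** adjoint_mat U = mat 1" using matrix_left_right_inverse by blast
  have AU: "A ** U = U ** diag_mat lam"
  proof -
    have "(A ** U) $ i $ c = (A *v f (g c)) $ i" for i c
      unfolding U_def matrix_matrix_mult_def matrix_vector_mult_def by simp
    also have "... i c = complex_of_real (lam c) * f (g c) $ i" for i c
      using ev[OF gl] unfolding lam_def by simp
    also have "... i c = (U ** diag_mat lam) $ i $ c" for i c
      unfolding U_def matrix_matrix_mult_def diag_mat_def
      by (simp add: if_distrib if_distribR mult.commute cong: if_cong)
    finally show ?thesis by (simp add: vec_eq_iff)
  qed
  have "A = A ** (U ** adjoint_mat U)" using UU2 by simp
  also have "... = U ** diag_mat lam ** adjoint_mat U" by (simp add: matrix_mul_assoc AU)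
  finally show ?thesis using UU UU2 unfolding unitary_mat_def by blast
qed



lemma mult_diag_right: "(M ** diag_mat d) $ a $ b = M $ a $ b * complex_of_real (d b)"
  unfolding matrix_matrix_mult_def diag_mat_def
  by (simp add: if_distrib if_distribR cong: if_cong)

lemma mult_diag_left: "(diag_mat d ** M) $ a $ b = complex_of_real (d a) * M $ a $ b"
  unfolding matrix_matrix_mult_def diag_mat_def
  by (simp add: if_distrib if_distribR cong: if_cong)

lemma diag_mult: "diag_mat d ** diag_mat e = diag_mat (\<lambda>k. d k * e k)"
  by (simp add: vec_eq_iff mult_diag_left) (simp add: diag_mat_def)

lemma udu_entry: "(U ** diag_mat d ** adjoint_mat U) $ i $ j = (\<Sum>k\<in>UNIV. U$i$k * complex_of_real (d k) * cnj (U$j$k))"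
  by (simp add: matrix_matrix_mult_def[of "U ** diag_mat d" "adjoint_mat U"] mult_diag_right)

lemma wd:
  fixes U V :: "complex^'n^'n"
  assumes U: "unitary_mat U" and V: "unitary_mat V"
    and eq: "U ** diag_mat l ** adjoint_mat U = V ** diag_mat m ** adjoint_mat V"
  shows "U ** diag_mat (g \<circ> l) ** adjoint_mat U = V ** diag_mat (g \<circ> m) ** adjoint_mat V"
proof -
  have UU: "adjoint_mat U ** U = mat 1" "U ** adjoint_mat U = mat 1" using U unfolding unitary_mat_def by auto
  have VV: "adjoint_mat V ** V = mat 1" "V ** adjoint_mat V = mat 1" using V unfolding unitary_mat_def by auto
  define W where "W = adjoint_mat V ** U"
  have "W ** diag_mat l = adjoint_mat V ** (U ** diag_mat l ** adjoint_mat U) ** U"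
    unfolding W_def by (simp add: matrix_mul_assoc[symmetric] UU)
  also have "... = adjoint_mat V ** (V ** diag_mat m ** adjoint_mat V) ** U" by (simp add: eq)
  also have "... = diag_mat m ** W"
    unfolding W_def by (simp add: matrix_mul_assoc VV)
  finally have WD: "W ** diag_mat l = diag_mat m ** W" .
  have "W ** diag_mat (g \<circ> l) = diag_mat (g \<circ> m) ** W"
  proof -
    have "W $ a $ b * complex_of_real (g (l b)) = complex_of_real (g (m a)) * W $ a $ b" for a b
    proof (cases "W $ a $ b = 0")
      case False
      have "W $ a $ b * complex_of_real (l b) = complex_of_real (m a) * W $ a $ b"
        using WD by (metis mult_diag_left mult_diag_right)
      with False have "l b = m a" by (simp add: mult.commute)
      thus ?thesis by (simp add: mult.commute)
    qed simp
    thus ?thesis by (simp add: vec_eq_iff mult_diag_left mult_diag_right)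
  qed
  have WU: "W ** adjoint_mat U = adjoint_mat V" unfolding W_def by (simp add: matrix_mul_assoc[symmetric] UU)
  have VW: "V ** W = U" unfolding W_def by (simp add: matrix_mul_assoc VV)
  have "V ** diag_mat (g \<circ> m) ** adjoint_mat V = V ** diag_mat (g \<circ> m) ** W ** adjoint_mat U"
    by (simp add: matrix_mul_assoc[symmetric] WU)
  also have "... = V ** (W ** diag_mat (g \<circ> l)) ** adjoint_mat U"
    by (simp add: matrix_mul_assoc \<open>W ** diag_mat (g \<circ> l) = diag_mat (g \<circ> m) ** W\<close>)
  also have "... = U ** diag_mat (g \<circ> l) ** adjoint_mat U" by (simp add: matrix_mul_assoc VW)
  finally show ?thesis by simp
qed

lemma matfun_eq:
  assumes U: "unitary_mat U" and A: "A = U ** diag_mat l ** adjoint_mat U"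
  shows "matfun g A = U ** diag_mat (g \<circ> l) ** adjoint_mat U"
proof -
  let ?P = "\<lambda>B. \<exists>U l. unitary_mat U \<and> A = U ** diag_mat l ** adjoint_mat U
                        \<and> B = U ** diag_mat (g \<circ> l) ** adjoint_mat U"
  have "?P (U ** diag_mat (g \<circ> l) ** adjoint_mat U)" using U A by blast
  hence "?P (matfun g A)" unfolding matfun_def by (rule someI)
  then obtain U' l' where U': "unitary_mat U'" "A = U' ** diag_mat l' ** adjoint_mat U'"
     and B: "matfun g A = U' ** diag_mat (g \<circ> l') ** adjoint_mat U'" by blast
  show ?thesis unfolding B by (rule wd[OF U' (1) U]) (use U' A in simp)
qed

lemma matfun_entry:
  assumes U: "unitary_mat U" and A: "A = U ** diag_mat l ** adjoint_mat U"
  shows "matfun g A $ i $ j = (\<Sum>k\<in>UNIV. U$i$k * complex_of_real (g (l k)) * cnj (U$j$k))"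
  by (simp add: matfun_eq[OF U A] udu_entry)



lemma spec_obtain:
  fixes A :: "complex^'n^'n"
  assumes "self_adjoint A"
  obtains U l where "unitary_mat U" "A = U ** diag_mat l ** adjoint_mat U"
  using spectral[OF assms] by blast

lemma unitary_UU: "unitary_mat U \<Longrightarrow> U ** adjoint_mat U = mat 1"
  and unitary_UU': "unitary_mat U \<Longrightarrow> adjoint_mat U ** U = mat 1"
  unfolding unitary_mat_def by auto

lemma matfun_add:
  fixes A :: "complex^'n^'n"
  assumes "self_adjoint A"
  shows "matfun (\<lambda>x. f x + g x) A = matfun f A + matfun g A"
proof -
  obtain U l where U: "unitary_mat U" "A = U ** diag_mat l ** adjoint_mat U" using spec_obtain[OF assms] .
  show ?thesis by (simp add: vec_eq_iff matfun_entry[OF U] algebra_simps sum.distrib)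
qed

lemma matfun_mult:
  fixes A :: "complex^'n^'n"
  assumes "self_adjoint A"
  shows "matfun (\<lambda>x. f x * g x) A = matfun f A ** matfun g A"
proof -
  obtain U l where U: "unitary_mat U" "A = U ** diag_mat l ** adjoint_mat U" using spec_obtain[OF assms] .
  have "matfun f A ** matfun g A = U ** diag_mat (f \<circ> l) ** (adjoint_mat U ** U) ** diag_mat (g \<circ> l) ** adjoint_mat U"
    by (simp add: matfun_eq[OF U] matrix_mul_assoc)
  also have "... = U ** (diag_mat (f \<circ> l) ** diag_mat (g \<circ> l)) ** adjoint_mat U"
    by (simp add: unitary_UU'[OF U(1)] matrix_mul_assoc)
  also have "... = matfun (\<lambda>x. f x * g x) A" by (simp add: diag_mult matfun_eq[OF U] o_def)
  finally show ?thesis by simp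
qed

lemma matfun_const:
  fixes A :: "complex^'n^'n"
  assumes "self_adjoint A"
  shows "matfun (\<lambda>x. c) A $ i $ j = (if i = j then complex_of_real c else 0)"
proof -
  obtain U l where U: "unitary_mat U" "A = U ** diag_mat l ** adjoint_mat U" using spec_obtain[OF assms] .
  have "(U ** adjoint_mat U) $ i $ j = (if i = j then 1 else 0)" by (simp add: unitary_UU[OF U(1)] mat_def)
  hence "(\<Sum>k\<in>UNIV. U$i$k * cnj (U$j$k)) = (if i = j then 1 else 0)" by (simp add: matrix_matrix_mult_def)
  moreover have "(\<Sum>k\<in>UNIV. U$i$k * complex_of_real c * cnj (U$j$k)) = complex_of_real c * (\<Sum>k\<in>UNIV. U$i$k * cnj (U$j$k))"
    by (simp add: sum_distrib_left mult_ac)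
  ultimately have "(\<Sum>k\<in>UNIV. U$i$k * complex_of_real c * cnj (U$j$k)) = complex_of_real c * (if i = j then 1 else 0)"
    by simp
  thus ?thesis by (simp add: matfun_entry[OF U])
qed

lemma matfun_id:
  fixes A :: "complex^'n^'n"
  assumes "self_adjoint A"
  shows "matfun (\<lambda>x. x) A = A"
proof -
  obtain U l where U: "unitary_mat U" "A = U ** diag_mat l ** adjoint_mat U" using spec_obtain[OF assms] .
  show ?thesis using matfun_eq[OF U, of "\<lambda>x. x"] U(2) by (simp add: o_def)
qed

lemma matfun_lim:
  fixes A :: "complex^'n^'n"
  assumes "self_adjoint A" and lim: "\<And>x. (\<lambda>n. f n x) \<longlonglongrightarrow> g x"
  shows "(\<lambda>n. matfun (f n) A $ i $ j) \<longlonglongrightarrow> matfun g A $ i $ j"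
proof -
  obtain U l where U: "unitary_mat U" "A = U ** diag_mat l ** adjoint_mat U" using spec_obtain[OF assms(1)] .
  show ?thesis unfolding matfun_entry[OF U] by (intro tendsto_intros lim)
qed

definition MeasF :: "'a measure \<Rightarrow> ('a \<Rightarrow> complex^'n^'n) \<Rightarrow> (real \<Rightarrow> real) \<Rightarrow> bool" where
  "MeasF M Z g \<longleftrightarrow> (\<forall>i j. (\<lambda>w. matfun g (Z w) $ i $ j) \<in> borel_measurable M)"

context
  fixes M :: "'a measure" and Z :: "'a \<Rightarrow> complex^'n^'n"
  assumes sa: "\<And>w. w \<in> space M \<Longrightarrow> self_adjoint (Z w)"
    and Zm: "\<And>i j. (\<lambda>w. Z w $ i $ j) \<in> borel_measurable M"
begin

lemma MeasF_id: "MeasF M Z (\<lambda>x. x)"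
  unfolding MeasF_def using Zm by (subst measurable_cong[OF arg_cong[OF matfun_id[OF sa]]]) auto

lemma MeasF_const: "MeasF M Z (\<lambda>x. c)"
  unfolding MeasF_def by (subst measurable_cong[OF matfun_const[OF sa]]) auto

lemma MeasF_add:
  assumes "MeasF M Z f" "MeasF M Z g" shows "MeasF M Z (\<lambda>x. f x + g x)"
  unfolding MeasF_def
proof (intro allI)
  fix i j
  have "(\<lambda>w. matfun f (Z w) $ i $ j + matfun g (Z w) $ i $ j) \<in> borel_measurable M"
    using assms unfolding MeasF_def by (intro borel_measurable_add) auto
  thus "(\<lambda>w. matfun (\<lambda>x. f x + g x) (Z w) $ i $ j) \<in> borel_measurable M"
    by (subst measurable_cong[where g="\<lambda>w. matfun f (Z w) $ i $ j + matfun g (Z w) $ i $ j"])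
       (simp_all add: matfun_add[OF sa])
qed

lemma MeasF_mult: "MeasF M Z f \<Longrightarrow> MeasF M Z g \<Longrightarrow> MeasF M Z (\<lambda>x. f x * g x)"
  unfolding MeasF_def
  apply (subst measurable_cong[OF arg_cong[OF matfun_mult[OF sa]]])
   apply assumption
  apply (simp add: matrix_matrix_mult_def)
  apply (intro allI borel_measurable_sum borel_measurable_times)
  by auto

lemma MeasF_lim:
  assumes "\<And>n. MeasF M Z (f n)" "\<And>x. (\<lambda>n. f n x) \<longlonglongrightarrow> g x"
  shows "MeasF M Z g"
  unfolding MeasF_def
proof (intro allI)
  fix i j
  show "(\<lambda>w. matfun g (Z w) $ i $ j) \<in> borel_measurable M"
    by (rule borel_measurable_LIMSEQ_metric[of "\<lambda>n w. matfun (f n) (Z w) $ i $ j"])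
       (use assms in \<open>auto simp: MeasF_def intro: matfun_lim[OF sa]\<close>)
qed

lemma MeasF_sum: "finite S \<Longrightarrow> (\<And>y. y \<in> S \<Longrightarrow> MeasF M Z (G y)) \<Longrightarrow> MeasF M Z (\<lambda>x. \<Sum>y\<in>S. G y x)"
proof (induction S rule: finite_induct)
  case empty thus ?case using MeasF_const[of 0] by simp
next
  case (insert a S) thus ?case using MeasF_add[of "G a" "\<lambda>x. \<Sum>y\<in>S. G y x"] by simp
qed

lemma MeasF_poly: "real_polynomial_function p \<Longrightarrow> MeasF M Z p"
proof (induction rule: real_polynomial_function.induct)
  case (linear f)
  then obtain c where "f = (\<lambda>x. x * c)" by (auto simp: real_bounded_linear)
  thus ?case using MeasF_mult[OF MeasF_id MeasF_const] by simp
next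
  case (const c) show ?case by (rule MeasF_const)
next
  case (add f g) from add.IH show ?case by (rule MeasF_add)
next
  case (mult f g) from mult.IH show ?case by (rule MeasF_mult)
qed

lemma MeasF_cont:
  assumes cont: "continuous_on UNIV g"
  shows "MeasF M Z g"
proof -
  have "\<forall>n::nat. \<exists>p. real_polynomial_function p \<and> (\<forall>x\<in>{-real n..real n}. \<bar>g x - p x\<bar> < 1/(real n + 1))"
  proof
    fix n :: nat
    have c1: "compact {-real n..real n}" by simp
    have c2: "continuous_on {-real n..real n} g" by (rule continuous_on_subset[OF cont]) simp
    have c3: "0 < 1/(real n + 1)" by simp
    obtain p where "real_polynomial_function p" "\<And>x. x \<in> {-real n..real n} \<Longrightarrow> \<bar>g x - p x\<bar> < 1/(real n + 1)"
      using Stone_Weierstrass_real_polynomial_function[OF c1 c2 c3] by blast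
    thus "\<exists>p. real_polynomial_function p \<and> (\<forall>x\<in>{-real n..real n}. \<bar>g x - p x\<bar> < 1/(real n + 1))" by blast
  qed
  from choice[OF this] obtain P where P0: "\<forall>n. real_polynomial_function (P n) \<and> (\<forall>x\<in>{-real n..real n}. \<bar>g x - P n x\<bar> < 1/(real n + 1))"
    by blast
  have P: "\<And>n. real_polynomial_function (P n)" using P0 by blast
  have Pb: "\<And>n x. x \<in> {-real n..real n} \<Longrightarrow> \<bar>g x - P n x\<bar> < 1/(real n + 1)" using P0 by blast
  have "(\<lambda>n. P n x) \<longlonglongrightarrow> g x" for x
  proof (rule LIMSEQ_I)
    fix r :: real assume r: "0 < r"
    define N where "N = nat \<lceil>max \<bar>x\<bar> (1/r)\<rceil>"
    have N: "max \<bar>x\<bar> (1/r) \<le> real N" unfolding N_def by (rule real_nat_ceiling_ge)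
    show "\<exists>no. \<forall>n\<ge>no. norm (P n x - g x) < r"
    proof (intro exI allI impI)
      fix n assume "N \<le> n"
      hence "real N \<le> real n" by simp
      hence nx: "real n \<ge> \<bar>x\<bar>" and nr: "real n \<ge> 1/r" using N by auto
      have "x \<in> {-real n..real n}" using nx by auto
      hence "\<bar>g x - P n x\<bar> < 1/(real n + 1)" by (rule Pb)
      also have "1/(real n + 1) < r"
      proof -
        have "1/r < real n + 1" using nr by simp
        thus ?thesis using r by (simp add: field_simps)
      qed
      finally show "norm (P n x - g x) < r" by simp
    qed
  qed
  thus ?thesis by (rule MeasF_lim[of P, OF MeasF_poly[OF P]])
qed

lemma MeasF_atMost: "MeasF M Z (indicator {..a})"
proof -
  define h where "h n x = max 0 (min 1 (1 - real n * (x - a)))" for n :: nat and x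
  have "continuous_on UNIV (h n)" for n unfolding h_def by (intro continuous_intros)
  hence "MeasF M Z (h n)" for n by (rule MeasF_cont)
  moreover have "(\<lambda>n. h n x) \<longlonglongrightarrow> indicator {..a} x" for x
  proof (cases "x \<le> a")
    case True
    hence "h n x = 1" for n unfolding h_def using mult_nonneg_nonpos[of "real n" "x - a"] by auto
    thus ?thesis using True by simp
  next
    case False
    define N where "N = nat \<lceil>1/(x - a)\<rceil>"
    have "h n x = 0" if "N \<le> n" for n
    proof -
      have "real n \<ge> 1/(x-a)" using that unfolding N_def by linarith
      hence "real n * (x - a) \<ge> 1" using False by (simp add: field_simps)
      thus ?thesis unfolding h_def by simp
    qed
    hence "eventually (\<lambda>n. h n x = 0) sequentially" unfolding eventually_sequentially by blast
    thus ?thesis using False by (simp add: tendsto_eventually)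
  qed
  ultimately show ?thesis by (rule MeasF_lim)
qed

lemma MeasF_indicator:
  assumes "B \<in> sets borel"
  shows "MeasF M Z (indicator B)"
proof -
  have "B \<in> sigma_sets UNIV (range (\<lambda>a::real. {..a}))"
    using assms by (simp add: borel_eq_atMost sets_measure_of)
  thus ?thesis
  proof (induction rule: sigma_sets.induct)
    case (Basic a) thus ?case using MeasF_atMost by auto
  next
    case Empty thus ?case using MeasF_const[of 0] by simp
  next
    case (Compl a)
    have e: "(indicator (UNIV - a) :: real \<Rightarrow> real) = (\<lambda>x::real. 1 + (-1) * indicator a x)"
      by (auto simp: indicator_def fun_eq_iff)
    show ?case unfolding e by (rule MeasF_add[OF MeasF_const MeasF_mult[OF MeasF_const Compl.IH]])
  next
    case (Union a)
    have fin: "MeasF M Z (indicator (\<Union>i<k. a i))" for k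
    proof (induction k)
      case 0 thus ?case using MeasF_const[of 0] by simp
    next
      case (Suc k)
      have "(indicator (\<Union>i<Suc k. a i) :: real \<Rightarrow> real) =
        (\<lambda>x::real. indicator (\<Union>i<k. a i) x + indicator (a k) x + (-1) * (indicator (\<Union>i<k. a i) x * indicator (a k) x))"
        by (auto simp: indicator_def fun_eq_iff lessThan_Suc)
      thus ?case by (simp only:) (rule MeasF_add[OF MeasF_add[OF Suc.IH Union.IH]
          MeasF_mult[OF MeasF_const MeasF_mult[OF Suc.IH Union.IH]]])
    qed
    show ?case by (rule MeasF_lim[OF fin LIMSEQ_indicator_UN])
  qed
qed

lemma MeasF_borel:
  assumes g: "g \<in> borel_measurable borel"
  shows "MeasF M Z g"
proof -
  obtain F where F: "\<And>i. simple_function borel (F i)" and lim: "\<And>x. (\<lambda>i. F i x) \<longlonglongrightarrow> g x"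
    using borel_measurable_implies_sequence_metric[OF g, of 0] by auto
  have "MeasF M Z (F i)" for i
  proof -
    have fin: "finite (F i ` UNIV)" and sets: "\<And>y. y \<in> F i ` UNIV \<Longrightarrow> F i -` {y} \<in> sets borel"
      using F[of i] unfolding simple_function_def by auto
    have rep1: "F i x = (\<Sum>y\<in>F i ` UNIV. indicator (F i -` {y}) x * y)" for x
      by (subst simple_function_indicator_representation_banach[OF F[of i], of x]) (simp_all add: mult.commute)
    have rep: "F i = (\<lambda>x. \<Sum>y\<in>F i ` UNIV. indicator (F i -` {y}) x * y)"
      by (rule ext) (rule rep1)
    show ?thesis by (subst rep, intro MeasF_sum fin MeasF_mult MeasF_const MeasF_indicator sets)
  qed
  thus ?thesis by (rule MeasF_lim[OF _ lim])
qed

end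



definition qf :: "complex^'n^'n \<Rightarrow> complex^'n \<Rightarrow> complex" where
  "qf A v = cinner (A *v v) v"

lemma qf_expand: "qf A v = (\<Sum>i\<in>UNIV. \<Sum>j\<in>UNIV. A$i$j * (v$j * cnj (v$i)))"
  unfolding qf_def cinner_def matrix_vector_mult_def by (simp add: sum_distrib_right sum_distrib_left mult_ac)

lemma qf_add: "qf (A + B) v = qf A v + qf B v"
  by (simp add: qf_expand algebra_simps sum.distrib)
lemma qf_diff: "qf (A - B) v = qf A v - qf B v"
  by (simp add: qf_expand algebra_simps sum_subtractf)
lemma qf_scaleR: "qf (r *\<^sub>R A) v = complex_of_real r * qf A v"
  by (simp add: qf_expand sum_distrib_left scaleR_conv_of_real[where 'a=complex] mult_ac)

lemma qf_udu:
  fixes U :: "complex^'n^'n"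
  shows "qf (U ** diag_mat d ** adjoint_mat U) v =
     (\<Sum>k\<in>UNIV. complex_of_real (d k * (cmod ((adjoint_mat U *v v) $ k))^2))"
proof -
  define y where "y = adjoint_mat U *v v"
  have "(U ** diag_mat d ** adjoint_mat U) *v v = U *v (diag_mat d *v y)"
    unfolding y_def by (simp add: matrix_vector_mul_assoc matrix_mul_assoc)
  hence "qf (U ** diag_mat d ** adjoint_mat U) v = cinner (diag_mat d *v y) y"
    unfolding qf_def y_def by (simp add: cinner_adj)
  also have "diag_mat d *v y = (\<chi> k. complex_of_real (d k) * y $ k)"
    unfolding diag_mat_def matrix_vector_mult_def by (simp add: if_distrib if_distribR cong: if_cong)
  also have "cinner ... y = (\<Sum>k\<in>UNIV. complex_of_real (d k) * (y$k * cnj (y$k)))"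
    unfolding cinner_def by (simp add: mult.assoc)
  also have "... = (\<Sum>k\<in>UNIV. complex_of_real (d k * (cmod (y $ k))^2))"
    by (simp add: complex_norm_square[symmetric] del: of_real_power)
  finally show ?thesis unfolding y_def .
qed

lemma norm_le_opnorm: "norm (A *v v) \<le> opnorm A * norm v"
  for A :: "complex^'n^'n"
  unfolding opnorm_def by (rule onorm) simp

lemma cinner_cs: "cmod (cinner x y) \<le> norm x * norm y"
proof -
  have "cmod (cinner x y) \<le> (\<Sum>i\<in>UNIV. cmod (x$i) * cmod (y$i))"
    unfolding cinner_def by (rule order_trans[OF norm_sum]) (simp add: norm_mult)
  also have "... \<le> L2_set (\<lambda>i. cmod (x$i)) UNIV * L2_set (\<lambda>i. cmod (y$i)) UNIV"
    using L2_set_mult_ineq[of "\<lambda>i. cmod (x$i)" "\<lambda>i. cmod (y$i)" UNIV] by simp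
  finally show ?thesis by (simp add: norm_vec_def)
qed

lemma qf_le_opnorm: "Re (qf A v) \<le> opnorm A * (norm v)^2"
proof -
  have "Re (qf A v) \<le> cmod (qf A v)" by (rule complex_Re_le_cmod)
  also have "... \<le> norm (A *v v) * norm v" unfolding qf_def by (rule cinner_cs)
  also have "... \<le> opnorm A * norm v * norm v" by (rule mult_right_mono[OF norm_le_opnorm]) simp
  finally show ?thesis by (simp add: power2_eq_square mult_ac)
qed

lemma cinner_unitary: "unitary_mat U \<Longrightarrow> cinner (U *v x) (U *v x) = cinner x x"
  by (simp add: cinner_adj matrix_vector_mul_assoc unitary_UU')

lemma cinner_unitary': "unitary_mat U \<Longrightarrow> cinner (adjoint_mat U *v x) (adjoint_mat U *v x) = cinner x x"
  by (simp add: cinner_adj matrix_vector_mul_assoc unitary_UU)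

lemma opnorm_bound:
  fixes H :: "complex^'n^'n"
  assumes sa: "self_adjoint H" and b: "\<And>v. \<bar>Re (qf H v)\<bar> \<le> b * (norm v)^2"
  shows "opnorm H \<le> b"
proof -
  obtain U h where U: "unitary_mat U" and H: "H = U ** diag_mat h ** adjoint_mat U"
    using spec_obtain[OF sa] .
  have hb: "\<bar>h k\<bar> \<le> b" for k
  proof -
    define e where "e = (axis k 1 :: complex^'n)"
    define u where "u = U *v e"
    have ee: "cinner e e = 1" unfolding e_def cinner_def axis_def by (simp add: if_distrib cong: if_cong)
    have uu: "cinner u u = 1" unfolding u_def using cinner_unitary[OF U] ee by simp
    hence nu: "(norm u)^2 = 1" unfolding cinner_self by (metis of_real_1 of_real_eq_iff)
    have Uu: "adjoint_mat U *v u = e" unfolding u_def by (simp add: matrix_vector_mul_assoc unitary_UU'[OF U])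
    have "qf H u = (\<Sum>k'\<in>UNIV. complex_of_real (h k' * (cmod (e $ k'))^2))"
      unfolding H qf_udu Uu ..
    also have "... = complex_of_real (h k)" unfolding e_def axis_def
      by (simp add: if_distrib if_distribR cong: if_cong)
    finally have "Re (qf H u) = h k" by simp
    thus ?thesis using b[of u] nu by simp
  qed
  have b0: "0 \<le> b" using hb[of undefined] by linarith
  have "norm (H *v v) \<le> b * norm v" for v
  proof -
    define y where "y = adjoint_mat U *v v"
    have d: "diag_mat h *v y = (\<chi> k. complex_of_real (h k) * y$k)"
      unfolding diag_mat_def matrix_vector_mult_def by (simp add: if_distrib if_distribR cong: if_cong)
    have Hv: "H *v v = U *v (diag_mat h *v y)" unfolding H y_def by (simp add: matrix_vector_mul_assoc matrix_mul_assoc)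
    have "complex_of_real ((norm (H *v v))^2) = cinner (diag_mat h *v y) (diag_mat h *v y)"
      unfolding cinner_self[symmetric] Hv cinner_unitary[OF U] ..
    also have "... = (\<Sum>k\<in>UNIV. complex_of_real ((h k)^2) * (y$k * cnj (y$k)))"
      unfolding d cinner_def by (simp add: power2_eq_square mult_ac)
    also have "... = complex_of_real (\<Sum>k\<in>UNIV. (h k)^2 * (cmod (y$k))^2)"
      by (simp add: complex_norm_square[symmetric] del: of_real_power)
    finally have n1: "(norm (H *v v))^2 = (\<Sum>k\<in>UNIV. (h k)^2 * (cmod (y$k))^2)" by (metis of_real_eq_iff)
    have "complex_of_real ((norm v)^2) = cinner y y" unfolding y_def cinner_unitary'[OF U] by (rule cinner_self[symmetric])
    also have "... = complex_of_real ((norm y)^2)" by (rule cinner_self)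
    finally have "(norm v)^2 = (norm y)^2" by (metis of_real_eq_iff)
    also have "(norm y)^2 = (\<Sum>k\<in>UNIV. (cmod (y$k))^2)"
      by (simp add: norm_vec_def L2_set_def sum_nonneg)
    finally have n2: "(norm v)^2 = (\<Sum>k\<in>UNIV. (cmod (y$k))^2)" .
    have "(norm (H *v v))^2 \<le> (\<Sum>k\<in>UNIV. b^2 * (cmod (y$k))^2)" unfolding n1
    proof (rule sum_mono)
      fix k
      have "\<bar>h k\<bar>^2 \<le> b^2" by (rule power_mono[OF hb[of k]]) simp
      hence "(h k)^2 \<le> b^2" by simp
      thus "(h k)^2 * (cmod (y$k))^2 \<le> b^2 * (cmod (y$k))^2" by (rule mult_right_mono) simp
    qed
    also have "... = (b * norm v)^2" by (simp add: n2 sum_distrib_left power_mult_distrib)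
    finally show ?thesis by (rule power2_le_imp_le) (use b0 in simp)
  qed
  thus ?thesis unfolding opnorm_def by (intro onorm_le)
qed



lemma adjoint_diff: "adjoint_mat (A - B) = adjoint_mat A - adjoint_mat B"
  by (simp add: vec_eq_iff)
lemma adjoint_scaleR: "adjoint_mat (r *\<^sub>R A) = r *\<^sub>R adjoint_mat A"
  by (simp add: vec_eq_iff)
lemma adjoint_diag: "adjoint_mat (diag_mat d) = diag_mat d"
  by (simp add: vec_eq_iff diag_mat_def)

lemma sa_udu: "self_adjoint (U ** diag_mat d ** adjoint_mat U)"
  unfolding self_adjoint_def by (simp add: adjoint_mult adjoint_diag matrix_mul_assoc)

lemma sa_matfun:
  fixes A :: "complex^'n^'n"
  assumes "self_adjoint A" shows "self_adjoint (matfun g A)"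
proof -
  obtain U l where U: "unitary_mat U" "A = U ** diag_mat l ** adjoint_mat U" using spec_obtain[OF assms] .
  show ?thesis unfolding matfun_eq[OF U] by (rule sa_udu)
qed

lemma sa_diff: "self_adjoint A \<Longrightarrow> self_adjoint B \<Longrightarrow> self_adjoint (A - B)"
  unfolding self_adjoint_def by (simp add: adjoint_diff)
lemma sa_add: "self_adjoint A \<Longrightarrow> self_adjoint B \<Longrightarrow> self_adjoint (A + B)"
  unfolding self_adjoint_def by (simp add: vec_eq_iff)
lemma sa_scaleR: "self_adjoint A \<Longrightarrow> self_adjoint (r *\<^sub>R A)"
  unfolding self_adjoint_def by (simp add: adjoint_scaleR)

lemma sa_expect:
  fixes F :: "'a \<Rightarrow> complex^'n^'n"
  assumes "\<And>w. w \<in> space M \<Longrightarrow> self_adjoint (F w)"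
  shows "self_adjoint (mat_expect M F)"
proof -
  have "cnj (LINT w|M. F w $ j $ i) = (LINT w|M. F w $ i $ j)" for i j
  proof -
    have "cnj (LINT w|M. F w $ j $ i) = (LINT w|M. cnj (F w $ j $ i))" by simp
    also have "... = (LINT w|M. F w $ i $ j)"
    proof -
      have "cnj (F w $ j $ i) = F w $ i $ j" if "w \<in> space M" for w
      proof -
        have "adjoint_mat (F w) = F w" using assms that unfolding self_adjoint_def by blast
        thus "cnj (F w $ j $ i) = F w $ i $ j" by (metis adjoint_nth)
      qed
      thus ?thesis by (intro Bochner_Integration.integral_cong) auto
    qed
    finally show ?thesis .
  qed
  thus ?thesis unfolding self_adjoint_def mat_expect_def by (simp add: vec_eq_iff)
qed

lemma scaleR_mm: "((a::real) *\<^sub>R (A::complex^'n^'n)) ** (b *\<^sub>R B) = (a*b) *\<^sub>R (A ** B)"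
  unfolding vec_eq_iff
  by (simp add: matrix_matrix_mult_def sum_distrib_left scaleR_conv_of_real[where 'a=complex] mult_ac)

lemma psi_upper:
  fixes x :: real
  assumes "psi x \<le> ln (1 + x + x^2/2)"
  shows "psi x \<le> x + x^2/2"
proof -
  have "0 < 1 + x + x^2/2"
  proof -
    have e: "1 + x + x^2/2 = ((x+1)^2 + 1)/2" by (simp add: power2_eq_square field_simps)
    have "0 \<le> (x+1)^2" by (rule zero_le_power2)
    hence "0 < (x+1)^2 + 1" by linarith
    thus ?thesis unfolding e by (rule divide_pos_pos) simp
  qed
  hence "ln (1 + x + x^2/2) \<le> (1 + x + x^2/2) - 1" by (rule ln_le_minus_one)
  thus ?thesis using assms by simp
qed

lemma psi_lower:
  fixes x :: real
  assumes "- ln (1 - x + x^2/2) \<le> psi x"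
  shows "x - x^2/2 \<le> psi x"
proof -
  have "0 < 1 - x + x^2/2"
  proof -
    have e: "1 - x + x^2/2 = ((x-1)^2 + 1)/2" by (simp add: power2_eq_square field_simps)
    have "0 \<le> (x-1)^2" by (rule zero_le_power2)
    hence "0 < (x-1)^2 + 1" by linarith
    thus ?thesis unfolding e by (rule divide_pos_pos) simp
  qed
  hence "ln (1 - x + x^2/2) \<le> (1 - x + x^2/2) - 1" by (rule ln_le_minus_one)
  thus ?thesis using assms by simp
qed

lemma pw:
  fixes A :: "complex^'n^'n"
  assumes sa: "self_adjoint A" and g: "\<And>x. x - x^2/2 \<le> g x \<and> g x \<le> x + x^2/2"
  shows "\<bar>Re (qf (matfun g A) v) - Re (qf A v)\<bar> \<le> 1/2 * Re (qf (A ** A) v)"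
proof -
  obtain U l where U: "unitary_mat U" "A = U ** diag_mat l ** adjoint_mat U" using spec_obtain[OF sa] .
  define y where "y k = (cmod ((adjoint_mat U *v v) $ k))^2" for k
  have AA: "A ** A = U ** diag_mat (\<lambda>k. l k * l k) ** adjoint_mat U"
  proof -
    have "A ** A = U ** diag_mat l ** (adjoint_mat U ** U) ** diag_mat l ** adjoint_mat U"
      using U(2) by (simp add: matrix_mul_assoc)
    also have "... = U ** (diag_mat l ** diag_mat l) ** adjoint_mat U"
      by (simp add: unitary_UU'[OF U(1)] matrix_mul_assoc)
    finally show ?thesis by (simp add: diag_mult)
  qed
  have q1: "Re (qf (matfun g A) v) = (\<Sum>k\<in>UNIV. g (l k) * y k)"
    unfolding matfun_eq[OF U] qf_udu y_def by (simp add: Re_sum)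
  have q2: "Re (qf A v) = (\<Sum>k\<in>UNIV. l k * y k)"
    by (subst U(2)) (simp add: qf_udu y_def Re_sum)
  have q3: "Re (qf (A ** A) v) = (\<Sum>k\<in>UNIV. l k * l k * y k)"
    unfolding AA qf_udu y_def by (simp add: Re_sum)
  have "\<bar>(\<Sum>k\<in>UNIV. g (l k) * y k) - (\<Sum>k\<in>UNIV. l k * y k)\<bar> = \<bar>\<Sum>k\<in>UNIV. (g (l k) - l k) * y k\<bar>"
    by (simp add: sum_subtractf left_diff_distrib)
  also have "... \<le> (\<Sum>k\<in>UNIV. \<bar>(g (l k) - l k) * y k\<bar>)" by (rule sum_abs)
  also have "... \<le> (\<Sum>k\<in>UNIV. 1/2 * (l k * l k * y k))"
  proof (rule sum_mono)
    fix k
    have y0: "0 \<le> y k" unfolding y_def by simp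
    have "\<bar>g (l k) - l k\<bar> \<le> (l k)^2/2" using g[of "l k"] by linarith
    hence "\<bar>g (l k) - l k\<bar> * y k \<le> (l k)^2/2 * y k" by (rule mult_right_mono[OF _ y0])
    thus "\<bar>(g (l k) - l k) * y k\<bar> \<le> 1/2 * (l k * l k * y k)"
      using y0 by (simp add: abs_mult power2_eq_square)
  qed
  also have "... = 1/2 * (\<Sum>k\<in>UNIV. l k * l k * y k)" by (simp add: sum_distrib_left)
  finally show ?thesis unfolding q1 q2 q3 .
qed

lemma qf_expect:
  assumes F: "\<And>i j. integrable M (\<lambda>w. F w $ i $ j)"
  shows "qf (mat_expect M F) v = (LINT w|M. qf (F w) v)"
proof -
  define c where "c i j = v$j * cnj (v$i)" for i j
  have int: "integrable M (\<lambda>w. F w $ i $ j * c i j)" for i j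
    by (rule integrable_mult_left) (rule F)
  have "(LINT w|M. qf (F w) v) = integral\<^sup>L M (\<lambda>w. \<Sum>i\<in>UNIV. \<Sum>j\<in>UNIV. F w $ i $ j * c i j)"
    unfolding qf_expand c_def ..
  also have "... = (\<Sum>i\<in>UNIV. integral\<^sup>L M (\<lambda>w. \<Sum>j\<in>UNIV. F w $ i $ j * c i j))"
    by (rule Bochner_Integration.integral_sum) (rule Bochner_Integration.integrable_sum, rule int)
  also have "... = (\<Sum>i\<in>UNIV. \<Sum>j\<in>UNIV. integral\<^sup>L M (\<lambda>w. F w $ i $ j * c i j))"
    by (rule sum.cong[OF refl], rule Bochner_Integration.integral_sum, rule int)
  also have "... = (\<Sum>i\<in>UNIV. \<Sum>j\<in>UNIV. integral\<^sup>L M (\<lambda>w. F w $ i $ j) * c i j)"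
    by (simp only: integral_mult_left_zero)
  also have "... = qf (mat_expect M F) v"
    unfolding qf_expand c_def mat_expect_def by simp
  finally show ?thesis ..
qed



lemma two_ab: "2*a*b \<le> a^2 + (b::real)^2"
proof -
  have "0 \<le> (a-b)^2" by (rule zero_le_power2)
  moreover have "(a-b)^2 = a^2 + b^2 - 2*a*b" by (simp add: power2_eq_square algebra_simps)
  ultimately show ?thesis by linarith
qed

lemma sum_sq: "(a + b)^2 \<le> 2*a^2 + 2*(b::real)^2"
proof -
  have "(a+b)^2 = a^2 + b^2 + 2*a*b" by (simp add: power2_eq_square algebra_simps)
  thus ?thesis using two_ab[of a b] by linarith
qed

lemma prod_sq: "0 \<le> a \<Longrightarrow> 0 \<le> b \<Longrightarrow> a*b \<le> a^2 + (b::real)^2"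
  using two_ab[of a b] mult_nonneg_nonneg[of a b] by linarith

lemma lin_sq: "0 \<le> a \<Longrightarrow> a \<le> 1 + (a::real)^2"
  using two_ab[of a 1] by simp

lemma abs_sq: "\<bar>x\<bar> \<le> 1/2 + (x::real)^2/2"
  using two_ab[of "\<bar>x\<bar>" 1] by simp

lemma axis_mv: "(U *v axis k 1) $ a = U $ a $ k" for U :: "complex^'n^'n"
  unfolding matrix_vector_mult_def axis_def by (simp add: if_distrib cong: if_cong)

lemma Xbound:
  fixes A :: "complex^'n^'n"
  assumes sa: "self_adjoint A" and g: "\<And>x. \<bar>g x\<bar> \<le> 1 + x^2"
  shows "cmod (matfun g A $ i $ j) \<le> real CARD('n) * (1 + (\<Sum>a\<in>UNIV. \<Sum>b\<in>UNIV. cmod (A$a$b))^2)"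
proof -
  obtain U l where U: "unitary_mat U" "A = U ** diag_mat l ** adjoint_mat U" using spec_obtain[OF sa] .
  define c where "c = (\<Sum>a\<in>UNIV. \<Sum>b\<in>UNIV. cmod (A$a$b))"
  have c0: "0 \<le> c" unfolding c_def by (intro sum_nonneg) auto
  have Ub: "cmod (U$a$k) \<le> 1" for a k
  proof -
    have "(U ** adjoint_mat U)$a$a = 1" by (simp add: unitary_UU[OF U(1)] mat_def)
    hence "(\<Sum>k\<in>UNIV. U$a$k * cnj (U$a$k)) = 1" by (simp add: matrix_matrix_mult_def)
    hence "complex_of_real (\<Sum>k\<in>UNIV. (cmod (U$a$k))^2) = 1"
      by (simp add: complex_norm_square[symmetric] del: of_real_power)
    hence s1: "(\<Sum>k\<in>UNIV. (cmod (U$a$k))^2) = 1" by (metis of_real_eq_1_iff)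
    have "(cmod (U$a$k))^2 \<le> (\<Sum>k\<in>UNIV. (cmod (U$a$k))^2)" by (rule member_le_sum) auto
    hence "(cmod (U$a$k))^2 \<le> 1^2" using s1 by simp
    thus ?thesis by (rule power2_le_imp_le) simp
  qed
  have lb: "\<bar>l k\<bar> \<le> c" for k
  proof -
    define e where "e = (axis k 1 :: complex^'n)"
    define u where "u = U *v e"
    have Uu: "adjoint_mat U *v u = e" unfolding u_def by (simp add: matrix_vector_mul_assoc unitary_UU'[OF U(1)])
    have "qf A u = (\<Sum>k'\<in>UNIV. complex_of_real (l k' * (cmod (e $ k'))^2))"
      unfolding U(2) qf_udu Uu ..
    also have "... = complex_of_real (l k)" unfolding e_def axis_def
      by (simp add: if_distrib if_distribR cong: if_cong)
    finally have q: "qf A u = complex_of_real (l k)" .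
    have ub: "cmod (u$a) \<le> 1" for a unfolding u_def e_def axis_mv by (rule Ub)
    have "cmod (qf A u) \<le> (\<Sum>a\<in>UNIV. \<Sum>b\<in>UNIV. cmod (A$a$b * (u$b * cnj (u$a))))"
      unfolding qf_expand by (rule order_trans[OF norm_sum sum_mono[OF norm_sum]])
    also have "... \<le> (\<Sum>a\<in>UNIV. \<Sum>b\<in>UNIV. cmod (A$a$b))"
    proof (intro sum_mono)
      fix a b
      have "cmod (u$b) * cmod (u$a) \<le> 1 * 1" using ub[of a] ub[of b] by (intro mult_mono) auto
      hence "cmod (A$a$b) * (cmod (u$b) * cmod (u$a)) \<le> cmod (A$a$b) * 1"
        by (intro mult_left_mono) auto
      thus "cmod (A$a$b * (u$b * cnj (u$a))) \<le> cmod (A$a$b)" by (simp add: norm_mult)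
    qed
    finally show ?thesis using q unfolding c_def by simp
  qed
  have "cmod (matfun g A $ i $ j) \<le> (\<Sum>k\<in>UNIV. cmod (U$i$k * complex_of_real (g (l k)) * cnj (U$j$k)))"
    unfolding matfun_entry[OF U] by (rule norm_sum)
  also have "... \<le> (\<Sum>k\<in>(UNIV::'n set). 1 + c^2)"
  proof (rule sum_mono)
    fix k
    have "\<bar>l k\<bar>^2 \<le> c^2" by (rule power_mono[OF lb[of k]]) simp
    hence "(l k)^2 \<le> c^2" by simp
    hence gk: "\<bar>g (l k)\<bar> \<le> 1 + c^2" using g[of "l k"] by linarith
    have "cmod (U$i$k) * \<bar>g (l k)\<bar> * cmod (U$j$k) \<le> 1 * (1 + c^2) * 1"
      using Ub[of i k] Ub[of j k] gk by (intro mult_mono) auto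
    thus "cmod (U$i$k * complex_of_real (g (l k)) * cnj (U$j$k)) \<le> 1 + c^2" by (simp add: norm_mult)
  qed
  also have "... = real CARD('n) * (1 + c^2)" by simp
  finally show ?thesis unfolding c_def .
qed

lemma int_qf:
  assumes "\<And>i j. integrable M (\<lambda>w. F w $ i $ j)"
  shows "integrable M (\<lambda>w. Re (qf (F w) v))"
  unfolding qf_expand
  by (rule integrable_Re, rule Bochner_Integration.integrable_sum, rule Bochner_Integration.integrable_sum,
      rule integrable_mult_left, rule assms)

lemma Re_qf_expect:
  assumes "\<And>i j. integrable M (\<lambda>w. F w $ i $ j)"
  shows "Re (qf (mat_expect M F) v) = (LINT w|M. Re (qf (F w) v))"
proof -
  have "integrable M (\<lambda>w. qf (F w) v)"
    unfolding qf_expand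
    by (rule Bochner_Integration.integrable_sum, rule Bochner_Integration.integrable_sum,
      rule integrable_mult_left, rule assms)
  thus ?thesis unfolding qf_expect[OF assms]
    by (simp add: integral_bounded_linear[OF bounded_linear_Re])
qed



theorem lemmaB4:
  fixes M :: "'a measure" and Y :: "'a \<Rightarrow> complex ^'n ^'n :: finite"
    and psi :: "real \<Rightarrow> real" and \<theta> :: real and S :: "complex ^'n ^'n"
  assumes "prob_space M"
    and psi_meas: "psi \<in> borel_measurable borel"
    and psi_bounds: "\<And>x. - ln (1 - x + x^2/2) \<le> psi x \<and> psi x \<le> ln (1 + x + x^2/2)"
    and Y_sa: "\<And>w. w \<in> space M \<Longrightarrow> self_adjoint (Y w)"
    and Y_meas: "\<And>i j. (\<lambda>w. Y w $ i $ j) \<in> borel_measurable M"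
    and Y_mom2: "\<And>i j. integrable M (\<lambda>w. (cmod (Y w $ i $ j))^2)"
    and theta_pos: "\<theta> > 0"
    and S_sa: "self_adjoint S"
  shows "opnorm (S - mat_expect M Y
                  + (1/\<theta>) *\<^sub>R mat_expect M (\<lambda>w. matfun psi (\<theta> *\<^sub>R (Y w - S))))
         \<le> \<theta>/2 * opnorm (mat_expect M (\<lambda>w. (Y w - S) ** (Y w - S)))"
proof -
  interpret P: prob_space M by (rule assms(1))
  define Z where "Z w = Y w - S" for w
  define A where "A w = \<theta> *\<^sub>R Z w" for w
  define X where "X w = matfun psi (A w)" for w
  define ZZ where "ZZ w = Z w ** Z w" for w
  have Zsa: "self_adjoint (Z w)" if "w \<in> space M" for w
    unfolding Z_def by (rule sa_diff[OF Y_sa[OF that] S_sa])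
  have Asa: "self_adjoint (A w)" if "w \<in> space M" for w
    unfolding A_def by (rule sa_scaleR[OF Zsa[OF that]])
  have Zm: "(\<lambda>w. Z w $ i $ j) \<in> borel_measurable M" for i j
    unfolding Z_def using Y_meas[of i j] by simp
  have Am: "(\<lambda>w. A w $ i $ j) \<in> borel_measurable M" for i j
    unfolding A_def using Zm[of i j] by simp
  have Xm: "(\<lambda>w. X w $ i $ j) \<in> borel_measurable M" for i j
    using MeasF_borel[OF Asa Am psi_meas] unfolding MeasF_def X_def by blast
  define z where "z i j w = cmod (Z w $ i $ j)" for i j w
  have zm: "z i j \<in> borel_measurable M" for i j unfolding z_def using Zm[of i j] by measurable
  have z2: "integrable M (\<lambda>w. (z i j w)^2)" for i j
  proof (rule Bochner_Integration.integrable_bound)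
    show "integrable M (\<lambda>w. 2 * (cmod (Y w $ i $ j))^2 + 2 * (cmod (S $ i $ j))^2)"
      using Y_mom2[of i j] by simp
    show "(\<lambda>w. (z i j w)^2) \<in> borel_measurable M" using zm by measurable
    show "AE w in M. norm ((z i j w)^2) \<le> norm (2 * (cmod (Y w $ i $ j))^2 + 2 * (cmod (S $ i $ j))^2)"
    proof (rule AE_I2)
      fix w
      have "z i j w \<le> cmod (Y w $ i $ j) + cmod (S $ i $ j)"
        unfolding z_def Z_def by (simp add: norm_triangle_ineq4)
      hence "(z i j w)^2 \<le> (cmod (Y w $ i $ j) + cmod (S $ i $ j))^2"
        by (intro power_mono) (auto simp: z_def)
      also have "... \<le> 2 * (cmod (Y w $ i $ j))^2 + 2 * (cmod (S $ i $ j))^2"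
        by (rule sum_sq)
      finally show "norm ((z i j w)^2) \<le> norm (2 * (cmod (Y w $ i $ j))^2 + 2 * (cmod (S $ i $ j))^2)"
        by simp
    qed
  qed
  have L2: "integrable M (\<lambda>w. z i j w * z k l w)" for i j k l
  proof (rule Bochner_Integration.integrable_bound)
    show "integrable M (\<lambda>w. (z i j w)^2 + (z k l w)^2)" using z2 by simp
    show "(\<lambda>w. z i j w * z k l w) \<in> borel_measurable M" using zm by measurable
    show "AE w in M. norm (z i j w * z k l w) \<le> norm ((z i j w)^2 + (z k l w)^2)"
    proof (rule AE_I2)
      fix w
      have a: "0 \<le> z i j w" "0 \<le> z k l w" by (auto simp: z_def)
      have "z i j w * z k l w \<le> (z i j w)^2 + (z k l w)^2"
        by (rule prod_sq[OF a])
      thus "norm (z i j w * z k l w) \<le> norm ((z i j w)^2 + (z k l w)^2)" using a by simp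
    qed
  qed
  have z1: "integrable M (z i j)" for i j
  proof (rule Bochner_Integration.integrable_bound)
    show "integrable M (\<lambda>w. 1 + (z i j w)^2)" using z2 by simp
    show "z i j \<in> borel_measurable M" by (rule zm)
    show "AE w in M. norm (z i j w) \<le> norm (1 + (z i j w)^2)"
    proof (rule AE_I2)
      fix w
      have a: "0 \<le> z i j w" by (auto simp: z_def)
      have "z i j w \<le> 1 + (z i j w)^2" by (rule lin_sq[OF a])
      thus "norm (z i j w) \<le> norm (1 + (z i j w)^2)" using a by simp
    qed
  qed
  have Zint: "integrable M (\<lambda>w. Z w $ i $ j)" for i j
    using z1[of i j] Zm[of i j] unfolding z_def by (simp add: integrable_norm_iff)
  have Yint: "integrable M (\<lambda>w. Y w $ i $ j)" for i j
  proof -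
    have "(\<lambda>w. Y w $ i $ j) = (\<lambda>w. Z w $ i $ j + S $ i $ j)" by (simp add: Z_def fun_eq_iff)
    thus ?thesis using Zint[of i j] by simp
  qed
  have ZZint: "integrable M (\<lambda>w. ZZ w $ i $ j)" for i j
    unfolding ZZ_def matrix_matrix_mult_def
  proof (simp, intro Bochner_Integration.integrable_sum)
    fix k
    show "integrable M (\<lambda>w. Z w $ i $ k * Z w $ k $ j)"
    proof (rule Bochner_Integration.integrable_bound[OF L2[of i k k j]])
      show "(\<lambda>w. Z w $ i $ k * Z w $ k $ j) \<in> borel_measurable M" using Zm by measurable
      show "AE w in M. norm (Z w $ i $ k * Z w $ k $ j) \<le> norm (z i k w * z k j w)"
        by (rule AE_I2) (simp add: z_def norm_mult)
    qed
  qed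
  have Xint: "integrable M (\<lambda>w. X w $ i $ j)" for i j
  proof -
    define c where "c w = (\<Sum>a\<in>UNIV. \<Sum>b\<in>UNIV. z a b w)" for w
    have cc: "integrable M (\<lambda>w. c w * c w)"
      unfolding c_def by (simp only: sum_distrib_left sum_distrib_right) (intro Bochner_Integration.integrable_sum L2)
    have gb: "\<bar>psi x\<bar> \<le> 1 + x^2" for x
    proof -
      have u: "psi x \<le> x + x^2/2" using psi_upper psi_bounds by blast
      have l: "x - x^2/2 \<le> psi x" using psi_lower psi_bounds by blast
      have "\<bar>x\<bar> \<le> 1/2 + x^2/2" by (rule abs_sq)
      thus ?thesis using u l by linarith
    qed
    show ?thesis
    proof (rule Bochner_Integration.integrable_bound)
      show "integrable M (\<lambda>w. real CARD('n) * (1 + \<theta>^2 * (c w * c w)))" using cc by simp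
      show "(\<lambda>w. X w $ i $ j) \<in> borel_measurable M" by (rule Xm)
      show "AE w in M. norm (X w $ i $ j) \<le> norm (real CARD('n) * (1 + \<theta>^2 * (c w * c w)))"
      proof (rule AE_I2)
        fix w assume w: "w \<in> space M"
        have "(\<Sum>a\<in>UNIV. \<Sum>b\<in>UNIV. cmod (A w $ a $ b)) = \<theta> * c w"
          unfolding A_def c_def z_def using theta_pos by (simp add: sum_distrib_left)
        hence "norm (X w $ i $ j) \<le> real CARD('n) * (1 + (\<theta> * c w)^2)"
          using Xbound[OF Asa[OF w] gb, of i j] unfolding X_def by simp
        thus "norm (X w $ i $ j) \<le> norm (real CARD('n) * (1 + \<theta>^2 * (c w * c w)))"
          by (simp add: power2_eq_square mult_ac)
      qed
    qed
  qed
  define H where "H = S - mat_expect M Y + (1/\<theta>) *\<^sub>R mat_expect M X"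
  have Hsa: "self_adjoint H" unfolding H_def
    by (intro sa_add sa_diff S_sa sa_expect Y_sa sa_scaleR sa_matfun) (auto simp: X_def intro: sa_matfun Asa)
  have Qb: "\<bar>Re (qf H v)\<bar> \<le> \<theta>/2 * Re (qf (mat_expect M ZZ) v)" for v
  proof -
    define qY where "qY w = Re (qf (Y w) v)" for w
    define qX where "qX w = Re (qf (X w) v)" for w
    define qZ where "qZ w = Re (qf (ZZ w) v)" for w
    define s where "s = Re (qf S v)"
    have iY: "integrable M qY" unfolding qY_def by (rule int_qf[OF Yint])
    have iX: "integrable M qX" unfolding qX_def by (rule int_qf[OF Xint])
    have iZ: "integrable M qZ" unfolding qZ_def by (rule int_qf[OF ZZint])
    define f where "f w = qX w - \<theta> * (qY w - s)" for w
    have iF: "integrable M f" unfolding f_def using iX iY by simp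
    have eH: "Re (qf H v) = s - integral\<^sup>L M qY + (1/\<theta>) * integral\<^sup>L M qX"
      unfolding H_def qf_add qf_diff qf_scaleR s_def qY_def qX_def
      by (simp add: Re_qf_expect[OF Yint] Re_qf_expect[OF Xint])
    have eF: "integral\<^sup>L M f = integral\<^sup>L M qX - \<theta> * (integral\<^sup>L M qY - s)"
      unfolding f_def using iX iY by (simp add: P.prob_space)
    have pwb: "\<bar>f w\<bar> \<le> \<theta>^2/2 * qZ w" if w: "w \<in> space M" for w
    proof -
      have g: "x - x^2/2 \<le> psi x \<and> psi x \<le> x + x^2/2" for x
        using psi_upper psi_lower psi_bounds by blast
      have "\<bar>Re (qf (X w) v) - Re (qf (A w) v)\<bar> \<le> 1/2 * Re (qf (A w ** A w) v)"
        unfolding X_def by (rule pw[OF Asa[OF w] g])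
      moreover have "Re (qf (A w) v) = \<theta> * (qY w - s)"
        unfolding A_def Z_def qY_def s_def by (simp add: qf_scaleR qf_diff)
      moreover have "Re (qf (A w ** A w) v) = \<theta>^2 * qZ w"
        unfolding A_def qZ_def ZZ_def scaleR_mm by (simp add: qf_scaleR power2_eq_square)
      ultimately show ?thesis unfolding f_def qX_def by simp
    qed
    have "\<bar>integral\<^sup>L M f\<bar> \<le> integral\<^sup>L M (\<lambda>w. \<theta>^2/2 * qZ w)"
    proof -
      have "\<bar>integral\<^sup>L M f\<bar> \<le> integral\<^sup>L M (\<lambda>w. norm (f w))"
        using integral_norm_bound[of M f] by simp
      also have "... \<le> integral\<^sup>L M (\<lambda>w. \<theta>^2/2 * qZ w)"
        using iF iZ pwb by (intro integral_mono) auto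
      finally show ?thesis .
    qed
    also have "... = \<theta>^2/2 * Re (qf (mat_expect M ZZ) v)"
      unfolding qZ_def by (simp add: Re_qf_expect[OF ZZint])
    finally have b: "\<bar>integral\<^sup>L M f\<bar> \<le> \<theta>^2/2 * Re (qf (mat_expect M ZZ) v)" .
    have "Re (qf H v) = (1/\<theta>) * integral\<^sup>L M f"
      unfolding eH eF using theta_pos by (simp add: field_simps)
    hence "\<bar>Re (qf H v)\<bar> = (1/\<theta>) * \<bar>integral\<^sup>L M f\<bar>" using theta_pos by (simp add: abs_mult)
    also have "... \<le> (1/\<theta>) * (\<theta>^2/2 * Re (qf (mat_expect M ZZ) v))"
      using b theta_pos by (intro mult_left_mono) auto
    also have "... = \<theta>/2 * Re (qf (mat_expect M ZZ) v)"
      using theta_pos by (simp add: power2_eq_square field_simps)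
    finally show ?thesis .
  qed
  have "opnorm H \<le> \<theta>/2 * opnorm (mat_expect M ZZ)"
  proof (rule opnorm_bound[OF Hsa])
    fix v
    have "\<bar>Re (qf H v)\<bar> \<le> \<theta>/2 * Re (qf (mat_expect M ZZ) v)" by (rule Qb)
    also have "... \<le> \<theta>/2 * (opnorm (mat_expect M ZZ) * (norm v)^2)"
      using theta_pos by (intro mult_left_mono qf_le_opnorm) auto
    finally show "\<bar>Re (qf H v)\<bar> \<le> \<theta>/2 * opnorm (mat_expect M ZZ) * (norm v)^2" by (simp add: mult_ac)
  qed
  thus ?thesis unfolding H_def X_def A_def ZZ_def Z_def .
qed


end
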